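(* Let $\rho$ be a normal ruling of a front of a Legendrian link $\Lambda$. For any choice of orientations of $\Lambda$ and of $\Lambda^\rho$, \[ \mathrm{rlk}_2(\rho)\equiv \tfrac12\big(tb(\Lambda)+\chi(\rho)+2e_2(\rho)\big) \pmod 2, \] where $2e_2(\rho)$ is understood as $2(s_-(\rho)+f_+-f_-)$ computed from these orientations.
   Context: Normal ruling: fix a front diagram of $\Lambda$ whose crossings and cusps have distinct $x$-coordinates. A normal ruling $\rho$ is a set of crossings (switches) such that, letting $\Lambda^\rho$ be the front obtained by resolving each switch into two horizontal non-crossing segments: (i) each component of $\Lambda^\rho$ is planar isotopic to the standard front of the maximal-$tb$ Legendrian unknot; (ii) exactly two components of $\Lambda^\rho$ are incident to each switch; (iii) in a small vertical strip around each switch, the two incident ruling disks are either nested or disjoint. $\chi(\rho)=c(\Lambda)-s(\rho)$ with $c(\Lambda)$ the number of right cusps and $s(\rho)$ the number of switches. Given orientations $o$ of $\Lambda$ and $o^\rho$ of $\Lambda^\rho$: $s_-(\rho)$ is the number of negative switches (w.r.t. $o$); a crossing of $\Lambda^\rho$ is flipped if its signs w.r.t. $o$ and $o^\rho$ differ; $f_\pm$ is the number of flipped crossings that are positive/negative w.r.t. $o^\rho$. The unoriented resolution linking number $\mathrm{rlk}_2(\rho)$ is the mod $2$ reduction of the sum of the pairwise linking numbers of the components of $\Lambda^\rho$, with any chosen orientation of the components. *)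

theory Defs
  imports Main
begin

text \<open>A generic front (crossings and cusps at distinct x-coordinates) is read from left
to right as a list of events. Between consecutive events there is a vertical slice;
slice i (for i = 0 .. length evs) lies just left of event i (slice length evs is at the far
right). In slice i the strands are numbered 0 .. width evs i - 1 by increasing height.
  Cr k : crossing of the strands at positions k and k+1;
  LC k : left cusp creating two new strands at positions k, k+1 (strands at positions
         j >= k move up by 2);
  RC k : right cusp joining the strands at positions k, k+1 (strands above move down by 2).\<close>

datatype event = Cr nat | LC nat | RC nat

fun epos :: "event \<Rightarrow> nat" where
  "epos (Cr k) = k" | "epos (LC k) = k" | "epos (RC k) = k"

primrec width :: "event list \<Rightarrow> nat \<Rightarrow> nat" where
  "width evs 0 = 0"
| "width evs (Suc i) =
     (case evs ! i of Cr _ \<Rightarrow> width evs i | LC _ \<Rightarrow> width evs i + 2 | RC _ \<Rightarrow> width evs i - 2)"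

definition wf_front :: "event list \<Rightarrow> bool" where
  "wf_front evs \<longleftrightarrow>
     (\<forall>i < length evs. case evs ! i of
         Cr k \<Rightarrow> Suc k < width evs i
       | LC k \<Rightarrow> k \<le> width evs i
       | RC k \<Rightarrow> Suc k < width evs i)
   \<and> width evs (length evs) = 0"

definition points :: "event list \<Rightarrow> (nat \<times> nat) set" where
  "points evs = {(i, j). i \<le> length evs \<and> j < width evs i}"

definition crossings :: "event list \<Rightarrow> nat set" where
  "crossings evs = {i. i < length evs \<and> (\<exists>k. evs ! i = Cr k)}"

definition lcusps :: "event list \<Rightarrow> nat set" where
  "lcusps evs = {i. i < length evs \<and> (\<exists>k. evs ! i = LC k)}"

definition rcusps :: "event list \<Rightarrow> nat set" where
  "rcusps evs = {i. i < length evs \<and> (\<exists>k. evs ! i = RC k)}"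

definition sw :: "nat \<Rightarrow> nat \<Rightarrow> nat" where
  "sw k j = (if j = k then Suc k else if j = Suc k then k else j)"

text \<open>Position in slice i+1 of the continuation of the strand at position j of slice i,
in the front obtained by resolving the crossings in S (S = {} gives the front itself).
At a resolved crossing (switch) the two strands continue horizontally.\<close>

definition nxt :: "event list \<Rightarrow> nat set \<Rightarrow> nat \<Rightarrow> nat \<Rightarrow> nat option" where
  "nxt evs S i j = (case evs ! i of
      Cr k \<Rightarrow> Some (if i \<in> S then j else sw k j)
    | LC k \<Rightarrow> Some (if j < k then j else j + 2)
    | RC k \<Rightarrow> (if j < k then Some j else if Suc k < j then Some (j - 2) else None))"

definition cont_edges :: "event list \<Rightarrow> nat set \<Rightarrow> ((nat \<times> nat) \<times> (nat \<times> nat)) set" where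
  "cont_edges evs S = {((i, j), (Suc i, j')) | i j j'.
      i < length evs \<and> j < width evs i \<and> nxt evs S i j = Some j'}"

definition cusp_edges :: "event list \<Rightarrow> ((nat \<times> nat) \<times> (nat \<times> nat)) set" where
  "cusp_edges evs =
     {((Suc i, k), (Suc i, Suc k)) | i k. i < length evs \<and> evs ! i = LC k}
   \<union> {((i, k), (i, Suc k)) | i k. i < length evs \<and> evs ! i = RC k}"

definition edges :: "event list \<Rightarrow> nat set \<Rightarrow> ((nat \<times> nat) \<times> (nat \<times> nat)) set" where
  "edges evs S = cont_edges evs S \<union> cusp_edges evs"

definition comp :: "event list \<Rightarrow> nat set \<Rightarrow> nat \<times> nat \<Rightarrow> (nat \<times> nat) set" where
  "comp evs S p = {q. (p, q) \<in> (edges evs S \<union> (edges evs S)\<inverse>)\<^sup>*}"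

definition components :: "event list \<Rightarrow> nat set \<Rightarrow> (nat \<times> nat) set set" where
  "components evs S = comp evs S ` points evs"

text \<open>An orientation assigns to every strand point whether it points to the right (True)
or to the left (False); it is constant along strands and reverses at cusps.\<close>

definition is_orientation :: "event list \<Rightarrow> nat set \<Rightarrow> (nat \<times> nat \<Rightarrow> bool) \<Rightarrow> bool" where
  "is_orientation evs S ori \<longleftrightarrow>
     (\<forall>(p, q) \<in> cont_edges evs S. ori p = ori q) \<and>
     (\<forall>(p, q) \<in> cusp_edges evs. ori p \<noteq> ori q)"

definition csign :: "event list \<Rightarrow> (nat \<times> nat \<Rightarrow> bool) \<Rightarrow> nat \<Rightarrow> int" where
  "csign evs ori i =
     (if ori (i, epos (evs ! i)) = ori (i, Suc (epos (evs ! i))) then 1 else -1)"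

definition writhe :: "event list \<Rightarrow> (nat \<times> nat \<Rightarrow> bool) \<Rightarrow> int" where
  "writhe evs ori = (\<Sum>i \<in> crossings evs. csign evs ori i)"

definition tb :: "event list \<Rightarrow> (nat \<times> nat \<Rightarrow> bool) \<Rightarrow> int" where
  "tb evs ori = writhe evs ori - int (card (rcusps evs))"

definition nested_or_disjoint :: "nat \<Rightarrow> nat \<Rightarrow> nat \<Rightarrow> nat \<Rightarrow> bool" where
  "nested_or_disjoint a1 b1 a2 b2 \<longleftrightarrow>
     (let I1 = {min a1 b1 .. max a1 b1}; I2 = {min a2 b2 .. max a2 b2}
      in I1 \<subseteq> I2 \<or> I2 \<subseteq> I1 \<or> I1 \<inter> I2 = {})"

text \<open>Normal ruling with switch set S.
 (i) every component of the resolved front is planar isotopic to the standard eye front: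
     it has exactly one left cusp, exactly one right cusp and no self-crossing;
 (ii) the two strands at each switch belong to two different components;
 (iii) near each switch the two ruling disks (vertical extents of the two incident
     components in the slice at the switch) are nested or disjoint.\<close>

definition normal_ruling :: "event list \<Rightarrow> nat set \<Rightarrow> bool" where
  "normal_ruling evs S \<longleftrightarrow>
     S \<subseteq> crossings evs \<and>
     (\<forall>C \<in> components evs S.
        card {i \<in> lcusps evs. comp evs S (Suc i, epos (evs ! i)) = C} = 1 \<and>
        card {i \<in> rcusps evs. comp evs S (i, epos (evs ! i)) = C} = 1 \<and>
        (\<forall>i \<in> crossings evs - S.
           \<not> (comp evs S (i, epos (evs ! i)) = C \<and> comp evs S (i, Suc (epos (evs ! i))) = C))) \<and>
     (\<forall>i \<in> S. comp evs S (i, epos (evs ! i)) \<noteq> comp evs S (i, Suc (epos (evs ! i)))) \<and>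
     (\<forall>i \<in> S. \<forall>a b. a < width evs i \<and> b < width evs i \<and>
         a \<noteq> epos (evs ! i) \<and> b \<noteq> Suc (epos (evs ! i)) \<and>
         (i, a) \<in> comp evs S (i, epos (evs ! i)) \<and>
         (i, b) \<in> comp evs S (i, Suc (epos (evs ! i))) \<longrightarrow>
         nested_or_disjoint (epos (evs ! i)) a (Suc (epos (evs ! i))) b)"

definition chi :: "event list \<Rightarrow> nat set \<Rightarrow> int" where
  "chi evs S = int (card (rcusps evs)) - int (card S)"

definition s_minus :: "event list \<Rightarrow> nat set \<Rightarrow> (nat \<times> nat \<Rightarrow> bool) \<Rightarrow> int" where
  "s_minus evs S ori = int (card {i \<in> S. csign evs ori i = -1})"

definition flipped :: "event list \<Rightarrow> nat set \<Rightarrow> (nat \<times> nat \<Rightarrow> bool) \<Rightarrow> (nat \<times> nat \<Rightarrow> bool) \<Rightarrow> nat set" where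
  "flipped evs S ori orr = {i \<in> crossings evs - S. csign evs ori i \<noteq> csign evs orr i}"

definition f_plus :: "event list \<Rightarrow> nat set \<Rightarrow> (nat \<times> nat \<Rightarrow> bool) \<Rightarrow> (nat \<times> nat \<Rightarrow> bool) \<Rightarrow> int" where
  "f_plus evs S ori orr = int (card {i \<in> flipped evs S ori orr. csign evs orr i = 1})"

definition f_minus :: "event list \<Rightarrow> nat set \<Rightarrow> (nat \<times> nat \<Rightarrow> bool) \<Rightarrow> (nat \<times> nat \<Rightarrow> bool) \<Rightarrow> int" where
  "f_minus evs S ori orr = int (card {i \<in> flipped evs S ori orr. csign evs orr i = -1})"

definition lk_pair :: "event list \<Rightarrow> nat set \<Rightarrow> (nat \<times> nat \<Rightarrow> bool) \<Rightarrow> (nat \<times> nat) set set \<Rightarrow> int" where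
  "lk_pair evs S orr P =
     (\<Sum>i \<in> {i \<in> crossings evs - S.
              {comp evs S (i, epos (evs ! i)), comp evs S (i, Suc (epos (evs ! i)))} = P}.
        csign evs orr i) div 2"

definition rlk2 :: "event list \<Rightarrow> nat set \<Rightarrow> (nat \<times> nat \<Rightarrow> bool) \<Rightarrow> int" where
  "rlk2 evs S orr =
     (\<Sum>P \<in> {P. \<exists>C \<in> components evs S. \<exists>D \<in> components evs S. C \<noteq> D \<and> P = {C, D}}.
        lk_pair evs S orr P) mod 2"

end

theory Submission imports Defs begin



fun cnt :: "nat list \<Rightarrow> nat" where
  "cnt [] = 0"
| "cnt (x # xs) = (if x = 1 then length (filter (\<lambda>y. y = 2) xs) else 0) + cnt xs"

lemma cnt_append: "cnt (xs @ ys) = cnt xs + cnt ys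
   + length (filter (\<lambda>y. y = 1) xs) * length (filter (\<lambda>y. y = 2) ys)"
  by (induction xs) (auto simp: algebra_simps)

lemma cnt_swap: "even (cnt (xs @ [a, b] @ ys) + cnt (xs @ [b, a] @ ys))
   \<longleftrightarrow> \<not> ((a = 1 \<and> b = 2) \<or> (a = 2 \<and> b = 1))"
  by (auto simp: cnt_append)

lemma cnt_dbl: "even (cnt (xs @ [a, a] @ ys) + cnt (xs @ ys))"
  by (auto simp: cnt_append)

lemma sw_sw: "sw k (sw k j) = j" by (auto simp: sw_def)

lemma nth_swapl:
  assumes "Suc k < length xs" "j < length xs"
  shows "(take k xs @ u # v # drop (Suc (Suc k)) xs) ! j =
     (if j < k then xs ! j else if j = k then u else if j = Suc k then v else xs ! j)"
proof -
  have "\<not> j < k \<Longrightarrow> j \<noteq> k \<Longrightarrow> j \<noteq> Suc k \<Longrightarrow> drop (Suc (Suc k)) xs ! (j - k - 2) = xs ! j"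
  proof -
    assume h: "\<not> j < k" "j \<noteq> k" "j \<noteq> Suc k"
    have e: "Suc (Suc k) + (j - k - 2) = j" using h by arith
    have "drop (Suc (Suc k)) xs ! (j - k - 2) = xs ! (Suc (Suc k) + (j - k - 2))"
      using assms by (intro nth_drop) simp
    then show ?thesis unfolding e .
  qed
  then show ?thesis using assms by (auto simp: nth_append min_def nth_Cons')
qed

lemma swap_list:
  assumes "Suc k < length xs"
  shows "map (\<lambda>j. xs ! sw k j) [0..<length xs] = take k xs @ [xs ! Suc k, xs ! k] @ drop (Suc (Suc k)) xs"
    and "xs = take k xs @ [xs ! k, xs ! Suc k] @ drop (Suc (Suc k)) xs"
proof -
  show "map (\<lambda>j. xs ! sw k j) [0..<length xs] = take k xs @ [xs ! Suc k, xs ! k] @ drop (Suc (Suc k)) xs"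
    by (rule nth_equalityI) (use assms in \<open>auto simp: nth_swapl sw_def\<close>)
  show "xs = take k xs @ [xs ! k, xs ! Suc k] @ drop (Suc (Suc k)) xs"
    by (rule nth_equalityI) (use assms in \<open>auto simp: nth_swapl\<close>)
qed

lemma ins_list:
  assumes "length ys = length xs + 2" "k \<le> length xs" "\<And>j. j < k \<Longrightarrow> ys ! j = xs ! j"
    "ys ! Suc k = ys ! k" "\<And>j. Suc (Suc k) \<le> j \<Longrightarrow> j < length ys \<Longrightarrow> ys ! j = xs ! (j - 2)"
  shows "ys = take k xs @ [ys ! k, ys ! k] @ drop k xs"
proof (rule nth_equalityI)
  show "length ys = length (take k xs @ [ys ! k, ys ! k] @ drop k xs)" using assms by auto
  fix j assume j: "j < length ys"
  show "ys ! j = (take k xs @ [ys ! k, ys ! k] @ drop k xs) ! j"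
  proof (cases "j < k")
    case True then show ?thesis using assms by (auto simp: nth_append min_def)
  next
    case False
    then consider "j = k" | "j = Suc k" | "Suc (Suc k) \<le> j" by linarith
    then show ?thesis
    proof cases
      case 3
      then have "drop k xs ! (j - k - 2) = xs ! (j - 2)" using assms j by (simp add: nth_drop)
      then show ?thesis using assms j 3 by (auto simp: nth_append min_def nth_Cons')
    qed (use assms in \<open>auto simp: nth_append min_def\<close>)
  qed
qed




definition lab :: "(nat \<times> nat) set \<Rightarrow> (nat \<times> nat) set \<Rightarrow> nat \<times> nat \<Rightarrow> nat" where
  "lab C D x = (if x \<in> C then 1 else if x \<in> D then 2 else 0)"

definition sl :: "event list \<Rightarrow> (nat \<times> nat) set \<Rightarrow> (nat \<times> nat) set \<Rightarrow> nat \<Rightarrow> nat list" where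
  "sl evs C D i = map (\<lambda>j. lab C D (i, j)) [0..<width evs i]"

lemma sl_len[simp]: "length (sl evs C D i) = width evs i" by (simp add: sl_def)
lemma sl_nth[simp]: "j < width evs i \<Longrightarrow> sl evs C D i ! j = lab C D (i, j)" by (simp add: sl_def)

definition Xc :: "event list \<Rightarrow> nat set \<Rightarrow> (nat \<times> nat) set \<Rightarrow> (nat \<times> nat) set \<Rightarrow> nat \<Rightarrow> bool" where
  "Xc evs S C D i \<longleftrightarrow> i \<notin> S \<and> (\<exists>k. evs ! i = Cr k) \<and>
     (((i, epos (evs ! i)) \<in> C \<and> (i, Suc (epos (evs ! i))) \<in> D) \<or>
      ((i, epos (evs ! i)) \<in> D \<and> (i, Suc (epos (evs ! i))) \<in> C))"

lemma wf_at: "wf_front evs \<Longrightarrow> i < length evs \<Longrightarrow> (case evs ! i of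
         Cr k \<Rightarrow> Suc k < width evs i
       | LC k \<Rightarrow> k \<le> width evs i
       | RC k \<Rightarrow> Suc k < width evs i)"
  unfolding wf_front_def by blast

lemma step:
  assumes wf: "wf_front evs" and i: "i < length evs"
    and cl: "\<And>x y. (x, y) \<in> edges evs S \<Longrightarrow> lab C D x = lab C D y"
    and disj: "C \<inter> D = {}"
  shows "even (cnt (sl evs C D (Suc i)) + cnt (sl evs C D i) + (if Xc evs S C D i then 1 else 0))"
proof (cases "evs ! i")
  case (Cr k)
  have k: "Suc k < width evs i" using wf_at[OF wf i] Cr by simp
  have w: "width evs (Suc i) = width evs i" using Cr by simp
  show ?thesis
  proof (cases "i \<in> S")
    case True
    have "sl evs C D (Suc i) = sl evs C D i"
    proof (rule nth_equalityI)
      fix j assume "j < length (sl evs C D (Suc i))"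
      then have j: "j < width evs i" using w by simp
      have "((i, j), (Suc i, j)) \<in> edges evs S"
        using i j True Cr unfolding edges_def cont_edges_def nxt_def by auto
      then show "sl evs C D (Suc i) ! j = sl evs C D i ! j" using cl j w by simp
    qed (simp add: w Cr)
    then show ?thesis using True by (simp add: Xc_def)
  next
    case False
    let ?xs = "sl evs C D i"
    have "sl evs C D (Suc i) = map (\<lambda>j. ?xs ! sw k j) [0..<length ?xs]"
    proof (rule nth_equalityI)
      fix j assume "j < length (sl evs C D (Suc i))"
      then have j: "j < width evs i" using w by simp
      have swl: "sw k j < width evs i" using j k by (auto simp: sw_def)
      have "((i, sw k j), (Suc i, j)) \<in> edges evs S"
        using i swl False Cr unfolding edges_def cont_edges_def nxt_def by (auto simp: sw_sw)
      then show "sl evs C D (Suc i) ! j = map (\<lambda>j. ?xs ! sw k j) [0..<length ?xs] ! j"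
        using cl j w swl by simp
    qed (simp add: w Cr)
    also have "\<dots> = take k ?xs @ [?xs ! Suc k, ?xs ! k] @ drop (Suc (Suc k)) ?xs"
      using k by (intro swap_list) simp
    finally have e1: "sl evs C D (Suc i) = take k ?xs @ [?xs ! Suc k, ?xs ! k] @ drop (Suc (Suc k)) ?xs" .
    have e2: "?xs = take k ?xs @ [?xs ! k, ?xs ! Suc k] @ drop (Suc (Suc k)) ?xs"
      using k by (intro swap_list) simp
    have X: "Xc evs S C D i \<longleftrightarrow> ((?xs ! k = 1 \<and> ?xs ! Suc k = 2) \<or> (?xs ! k = 2 \<and> ?xs ! Suc k = 1))"
      using False Cr k disj by (auto simp: Xc_def lab_def)
    have "even (cnt (take k ?xs @ [?xs ! Suc k, ?xs ! k] @ drop (Suc (Suc k)) ?xs) +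
                cnt (take k ?xs @ [?xs ! k, ?xs ! Suc k] @ drop (Suc (Suc k)) ?xs))
          \<longleftrightarrow> \<not> Xc evs S C D i"
      unfolding X cnt_swap by blast
    then have "even (cnt (sl evs C D (Suc i)) + cnt ?xs) \<longleftrightarrow> \<not> Xc evs S C D i"
      unfolding e1[symmetric] e2[symmetric] .
    then show ?thesis by auto
  qed
next
  case (LC k)
  have k: "k \<le> width evs i" using wf_at[OF wf i] LC by simp
  have w: "width evs (Suc i) = width evs i + 2" using LC by simp
  let ?xs = "sl evs C D i" and ?ys = "sl evs C D (Suc i)"
  have "?ys = take k ?xs @ [?ys ! k, ?ys ! k] @ drop k ?xs"
  proof (rule ins_list)
    show "length ?ys = length ?xs + 2" using w by simp
    show "k \<le> length ?xs" using k by simp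
    fix j
    show "j < k \<Longrightarrow> ?ys ! j = ?xs ! j"
    proof -
      assume jk: "j < k"
      have "((i, j), (Suc i, j)) \<in> edges evs S"
        using i jk k LC unfolding edges_def cont_edges_def nxt_def by auto
      then show ?thesis using cl jk k w by simp
    qed
    show "Suc (Suc k) \<le> j \<Longrightarrow> j < length ?ys \<Longrightarrow> ?ys ! j = ?xs ! (j - 2)"
    proof -
      assume jk: "Suc (Suc k) \<le> j" "j < length ?ys"
      have "((i, j - 2), (Suc i, j)) \<in> edges evs S"
        using i jk k LC w unfolding edges_def cont_edges_def nxt_def by auto
      then show ?thesis using cl jk k w by simp
    qed
  next
    have "((Suc i, k), (Suc i, Suc k)) \<in> edges evs S"
      using i LC unfolding edges_def cusp_edges_def by auto
    then show "?ys ! Suc k = ?ys ! k" using cl k w by simp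
  qed
  then show ?thesis using cnt_dbl[of "take k ?xs" "?ys ! k" "drop k ?xs"] LC
    by (simp add: Xc_def)
next
  case (RC k)
  have k: "Suc k < width evs i" using wf_at[OF wf i] RC by simp
  have w: "width evs (Suc i) = width evs i - 2" using RC by simp
  let ?xs = "sl evs C D (Suc i)" and ?ys = "sl evs C D i"
  have "?ys = take k ?xs @ [?ys ! k, ?ys ! k] @ drop k ?xs"
  proof (rule ins_list)
    show "length ?ys = length ?xs + 2" using w k by simp
    show "k \<le> length ?xs" using k w by simp
    fix j
    show "j < k \<Longrightarrow> ?ys ! j = ?xs ! j"
    proof -
      assume jk: "j < k"
      have "((i, j), (Suc i, j)) \<in> edges evs S"
        using i jk k RC unfolding edges_def cont_edges_def nxt_def by auto
      then show ?thesis using cl jk k w by simp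
    qed
    show "Suc (Suc k) \<le> j \<Longrightarrow> j < length ?ys \<Longrightarrow> ?ys ! j = ?xs ! (j - 2)"
    proof -
      assume jk: "Suc (Suc k) \<le> j" "j < length ?ys"
      have "((i, j), (Suc i, j - 2)) \<in> edges evs S"
        using i jk k RC w unfolding edges_def cont_edges_def nxt_def by auto
      then show ?thesis using cl jk k w by simp
    qed
  next
    have "((i, k), (i, Suc k)) \<in> edges evs S"
      using i RC unfolding edges_def cusp_edges_def by auto
    then show "?ys ! Suc k = ?ys ! k" using cl k w by simp
  qed
  then show ?thesis using cnt_dbl[of "take k ?xs" "?ys ! k" "drop k ?xs"] RC
    by (simp add: Xc_def add.commute)
qed

lemma parity_all:
  assumes wf: "wf_front evs"
    and cl: "\<And>x y. (x, y) \<in> edges evs S \<Longrightarrow> lab C D x = lab C D y"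
    and disj: "C \<inter> D = {}"
  shows "n \<le> length evs \<Longrightarrow> even (cnt (sl evs C D n) + (\<Sum>i<n. (if Xc evs S C D i then 1 else 0 :: nat)))"
proof (induction n)
  case 0 then show ?case by (simp add: sl_def)
next
  case (Suc n)
  then have "even (cnt (sl evs C D n) + (\<Sum>i<n. (if Xc evs S C D i then 1 else 0 :: nat)))" by simp
  moreover have "even (cnt (sl evs C D (Suc n)) + cnt (sl evs C D n) + (if Xc evs S C D n then 1 else 0))"
    using step[OF wf _ cl disj] Suc.prems by simp
  ultimately show ?case by simp presburger
qed

lemma parity_final:
  assumes wf: "wf_front evs"
    and cl: "\<And>x y. (x, y) \<in> edges evs S \<Longrightarrow> lab C D x = lab C D y"
    and disj: "C \<inter> D = {}"
  shows "even (card {i. i < length evs \<and> Xc evs S C D i})"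
proof -
  have "even (\<Sum>i<length evs. (if Xc evs S C D i then 1 else 0 :: nat))"
    using parity_all[OF wf cl disj, where n="length evs"] wf by (simp add: sl_def wf_front_def)
  moreover have "(\<Sum>i<length evs. (if Xc evs S C D i then 1 else 0 :: nat)) = card {i. i < length evs \<and> Xc evs S C D i}"
    using sum.inter_filter[where A="{..<length evs}" and g="\<lambda>_. 1::nat" and P="Xc evs S C D"] by simp
  ultimately show ?thesis by simp
qed




lemma comp_mem_iff: "x \<in> comp evs S p \<longleftrightarrow> comp evs S x = comp evs S p"
proof -
  let ?R = "edges evs S \<union> (edges evs S)\<inverse>"
  have sym: "(a, b) \<in> ?R\<^sup>* \<Longrightarrow> (b, a) \<in> ?R\<^sup>*" for a b
  proof -
    assume "(a, b) \<in> ?R\<^sup>*"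
    then have "(b, a) \<in> (?R\<inverse>)\<^sup>*" by (simp add: rtrancl_converse)
    moreover have "?R\<inverse> = ?R" by auto
    ultimately show ?thesis by simp
  qed
  show ?thesis
  proof
    assume "x \<in> comp evs S p"
    then have px: "(p, x) \<in> ?R\<^sup>*" by (simp add: comp_def)
    show "comp evs S x = comp evs S p"
      unfolding comp_def using px sym[OF px] by (auto intro: rtrancl_trans)
  next
    assume "comp evs S x = comp evs S p"
    moreover have "x \<in> comp evs S x" by (simp add: comp_def)
    ultimately show "x \<in> comp evs S p" by simp
  qed
qed

lemma comp_edge: "(x, y) \<in> edges evs S \<Longrightarrow> x \<in> comp evs S p \<longleftrightarrow> y \<in> comp evs S p"
  by (simp add: comp_def) (meson UnCI converse_iff rtrancl.rtrancl_into_rtrancl)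

lemma pm1_even: "finite A \<Longrightarrow> (\<forall>i\<in>A. f i = (1::int) \<or> f i = -1) \<Longrightarrow> even (sum f A) \<longleftrightarrow> even (card A)"
proof (induction A rule: finite_induct)
  case empty then show ?case by simp
next
  case (insert x F)
  then show ?case by auto
qed

lemma csign_pm: "csign evs ori i = 1 \<or> csign evs ori i = -1" by (simp add: csign_def)

lemma finite_points: "finite (points evs)"
proof -
  have "points evs = (SIGMA i:{..length evs}. {..<width evs i})" by (auto simp: points_def)
  then show ?thesis by simp
qed

lemma sum_ind: "finite A \<Longrightarrow> (\<Sum>i\<in>A. (if P i then 1 else 0 :: int)) = int (card {i\<in>A. P i})"
  using sum.inter_filter[where A=A and g="\<lambda>_. 1::int" and P=P] by simp




lemma writhe_part:
  assumes SC: "S \<subseteq> crossings evs"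
  shows "tb evs ori + chi evs S + 2 * (s_minus evs S ori + f_plus evs S ori orr - f_minus evs S ori orr)
       = (\<Sum>i \<in> crossings evs - S. csign evs orr i)"
proof -
  let ?N = "crossings evs - S"
  have fc: "finite (crossings evs)" by (rule finite_subset[of _ "{..<length evs}"]) (auto simp: crossings_def)
  have fS: "finite S" using finite_subset[OF SC fc] .
  have fN: "finite ?N" using fc by simp
  have w: "writhe evs ori = (\<Sum>i\<in>S. csign evs ori i) + (\<Sum>i\<in>?N. csign evs ori i)"
    unfolding writhe_def using sum.subset_diff[OF SC fc] by (simp add: add.commute)
  have s1: "(\<Sum>i\<in>S. csign evs ori i) = (\<Sum>i\<in>S. 1 - 2 * (if csign evs ori i = -1 then 1 else 0))"
    by (rule sum.cong) (auto simp: csign_def)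
  also have "\<dots> = int (card S) - 2 * s_minus evs S ori"
    by (simp add: sum_subtractf sum_distrib_left[symmetric] sum_ind[OF fS] s_minus_def)
  finally have s1: "(\<Sum>i\<in>S. csign evs ori i) = int (card S) - 2 * s_minus evs S ori" .
  let ?Fp = "{i \<in> flipped evs S ori orr. csign evs orr i = 1}"
  let ?Fm = "{i \<in> flipped evs S ori orr. csign evs orr i = -1}"
  have s2: "(\<Sum>i\<in>?N. csign evs ori i) = (\<Sum>i\<in>?N. csign evs orr i - 2 * (if i \<in> ?Fp then 1 else 0) + 2 * (if i \<in> ?Fm then 1 else 0))"
    by (rule sum.cong) (auto simp: csign_def flipped_def)
  also have "\<dots> = (\<Sum>i\<in>?N. csign evs orr i) - 2 * int (card {i\<in>?N. i \<in> ?Fp}) + 2 * int (card {i\<in>?N. i \<in> ?Fm})"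
    by (simp add: sum_subtractf sum.distrib sum_distrib_left[symmetric] sum_ind[OF fN])
  also have "{i\<in>?N. i \<in> ?Fp} = ?Fp" by (auto simp: flipped_def)
  also have "{i\<in>?N. i \<in> ?Fm} = ?Fm" by (auto simp: flipped_def)
  finally have s2: "(\<Sum>i\<in>?N. csign evs ori i) = (\<Sum>i\<in>?N. csign evs orr i) - 2 * f_plus evs S ori orr + 2 * f_minus evs S ori orr"
    by (simp add: f_plus_def f_minus_def)
  show ?thesis unfolding tb_def chi_def w s1 s2 by simp
qed




theorem lemma3p10:
  fixes evs :: "event list" and S :: "nat set" and ori orr :: "nat \<times> nat \<Rightarrow> bool"
  assumes "wf_front evs"
    and "normal_ruling evs S"
    and "is_orientation evs {} ori"
    and "is_orientation evs S orr"
  shows "(2 * rlk2 evs S orr) mod 4 =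
         (tb evs ori + chi evs S
            + 2 * (s_minus evs S ori + f_plus evs S ori orr - f_minus evs S ori orr)) mod 4"
proof -
  note wf = assms(1) and nr = assms(2)
  have SC: "S \<subseteq> crossings evs" using nr by (simp add: normal_ruling_def)
  let ?N = "crossings evs - S"
  let ?c = "\<lambda>p. comp evs S p"
  let ?P = "\<lambda>i. {?c (i, epos (evs ! i)), ?c (i, Suc (epos (evs ! i)))}"
  let ?I = "{P. \<exists>C \<in> components evs S. \<exists>D \<in> components evs S. C \<noteq> D \<and> P = {C, D}}"
  let ?T = "\<lambda>P. \<Sum>i \<in> {i \<in> ?N. ?P i = P}. csign evs orr i"
  have fc: "finite (crossings evs)" by (rule finite_subset[of _ "{..<length evs}"]) (auto simp: crossings_def)
  have fN: "finite ?N" using fc by simp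
  have fcomp: "finite (components evs S)" unfolding components_def using finite_points by simp
  have fI: "finite ?I"
  proof (rule finite_subset)
    show "?I \<subseteq> (\<lambda>(C, D). {C, D}) ` (components evs S \<times> components evs S)" by auto
  qed (use fcomp in simp)
  have PI: "?P ` ?N \<subseteq> ?I"
  proof
    fix P assume "P \<in> ?P ` ?N"
    then obtain i where i: "i \<in> ?N" and P: "P = ?P i" by blast
    obtain k where ik: "i < length evs" "evs ! i = Cr k" using i by (auto simp: crossings_def)
    have k: "Suc k < width evs i" using wf_at[OF wf ik(1)] ik by simp
    have c1: "?c (i, k) \<in> components evs S" "?c (i, Suc k) \<in> components evs S"
      unfolding components_def points_def using ik k by auto
    have "?c (i, k) \<noteq> ?c (i, Suc k)"
    proof
      assume e: "?c (i, k) = ?c (i, Suc k)"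
      have "\<forall>j\<in>crossings evs - S. \<not> (?c (j, epos (evs ! j)) = ?c (i, k) \<and> ?c (j, Suc (epos (evs ! j))) = ?c (i, k))"
        using nr c1(1) unfolding normal_ruling_def by blast
      then have "\<not> (?c (i, epos (evs ! i)) = ?c (i, k) \<and> ?c (i, Suc (epos (evs ! i))) = ?c (i, k))"
        using i by blast
      then show False using ik e by simp
    qed
    then show "P \<in> ?I" using c1 P ik by auto
  qed
  have Teven: "even (?T P)" if PI0: "P \<in> ?I" for P
  proof -
    obtain C D where C: "C \<in> components evs S" and D: "D \<in> components evs S" and CD: "C \<noteq> D" and P: "P = {C, D}"
      using PI0 by blast
    obtain p where p: "C = ?c p" using C unfolding components_def by blast
    obtain q where q: "D = ?c q" using D unfolding components_def by blast
    have disj: "C \<inter> D = {}"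
    proof (rule ccontr)
      assume "C \<inter> D \<noteq> {}"
      then obtain x where "x \<in> C" "x \<in> D" by blast
      then have "?c x = C" "?c x = D" using p q comp_mem_iff by metis+
      then show False using CD by simp
    qed
    have cl: "lab C D x = lab C D y" if "(x, y) \<in> edges evs S" for x y
      using comp_edge[OF that, of p] comp_edge[OF that, of q] p q by (simp add: lab_def)
    have memC: "?c x = C \<longleftrightarrow> x \<in> C" for x using p comp_mem_iff by metis
    have memD: "?c x = D \<longleftrightarrow> x \<in> D" for x using q comp_mem_iff by metis
    have eqset: "{i \<in> ?N. ?P i = P} = {i. i < length evs \<and> Xc evs S C D i}"
      unfolding P doubleton_eq_iff Xc_def using CD
      by (auto simp: crossings_def memC memD)
    have "even (card {i \<in> ?N. ?P i = P})"
      unfolding eqset by (rule parity_final[OF wf cl disj])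
    moreover have "finite {i \<in> ?N. ?P i = P}" using fN by (rule finite_subset[rotated]) auto
    ultimately show ?thesis using pm1_even[of "{i \<in> ?N. ?P i = P}" "csign evs orr"] csign_pm by blast
  qed
  have grp: "(\<Sum>P\<in>?I. ?T P) = (\<Sum>i\<in>?N. csign evs orr i)"
    using sum.group[OF fN fI PI, of "csign evs orr"] by simp
  let ?X = "\<Sum>P\<in>?I. ?T P div 2"
  have "2 * ?X = (\<Sum>P\<in>?I. 2 * (?T P div 2))" by (simp add: sum_distrib_left)
  also have "\<dots> = (\<Sum>P\<in>?I. ?T P)" using Teven by (intro sum.cong) auto
  finally have X2: "2 * ?X = (\<Sum>i\<in>?N. csign evs orr i)" using grp by simp
  have r: "rlk2 evs S orr = ?X mod 2" unfolding rlk2_def lk_pair_def by simp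
  have "(2 * rlk2 evs S orr) mod 4 = (2 * ?X) mod 4"
    unfolding r using mod_mult_mult1[of 2 ?X 2] by simp
  also have "\<dots> = (\<Sum>i\<in>?N. csign evs orr i) mod 4" using X2 by simp
  finally show ?thesis using writhe_part[OF SC, of ori orr] by simp
qed


end
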